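(* Let $u$ be a symmetric decreasing function on $\mathbb{T}$, and let $h,\bar h$ be pdfs such that $\bar h$ is more focused than $h$. Then for all $r\in\mathbb{T}$, $$\int h(x-r)u(x)\,dx\le\int\bar h(x)u(x)\,dx.$$
   Context: $\mathbb{T}=\mathbb{R}/\mathbb{Z}$, identified with $[-\tfrac12,\tfrac12)$; integrals are over $\mathbb{T}$. A pdf is a nonnegative function in $L^2(\mathbb{T})$ with integral 1. A function $u$ is symmetric decreasing if $u(x)=u(-x)$ and $u(x)\ge u(y)$ for all $0\le x\le y$ (here $y\le\tfrac12$). A function $\bar h$ is more focused than $h$ if for all $z\in[0,\tfrac12]$ and all $r\in\mathbb{T}$, $\int_{r-z}^{r+z}h\le\int_{-z}^{z}\bar h$. *)

theory Defs
  imports "HOL-Analysis.Analysis"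
begin

text \<open>Functions on the circle T = R/Z are represented as 1-periodic functions
  real => real; integrals over T are integrals over the fundamental domain [-1/2,1/2].\<close>

definition periodic1 :: "(real \<Rightarrow> real) \<Rightarrow> bool" where
  "periodic1 f \<longleftrightarrow> (\<forall>x. f (x + 1) = f x)"

definition is_pdf :: "(real \<Rightarrow> real) \<Rightarrow> bool" where
  "is_pdf h \<longleftrightarrow> periodic1 h \<and> (\<forall>x. 0 \<le> h x)
     \<and> h absolutely_integrable_on {-1/2..1/2}
     \<and> (\<lambda>x. (h x)\<^sup>2) absolutely_integrable_on {-1/2..1/2}
     \<and> integral {-1/2..1/2} h = 1"

definition symmetric_decreasing :: "(real \<Rightarrow> real) \<Rightarrow> bool" where
  "symmetric_decreasing u \<longleftrightarrow> periodic1 u \<and> (\<forall>x. u x = u (- x))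
     \<and> (\<forall>x y. 0 \<le> x \<and> x \<le> y \<and> y \<le> 1/2 \<longrightarrow> u y \<le> u x)"

definition more_focused :: "(real \<Rightarrow> real) \<Rightarrow> (real \<Rightarrow> real) \<Rightarrow> bool" where
  "more_focused hbar h \<longleftrightarrow>
     (\<forall>z r. 0 \<le> z \<and> z \<le> 1/2 \<longrightarrow> integral {r-z..r+z} h \<le> integral {-z..z} hbar)"

end

theory Submission
  imports Defs
begin

lemma periodic_int_shift:
  fixes h :: "real \<Rightarrow> real"
  assumes per: "\<forall>x. h (x + 1) = h x"
  shows "h (x + real_of_int k) = h x"
proof -
  have nat: "h (y + real n) = h y" for y n
  proof (induction n)
    case (Suc n)
    have "h (y + real (Suc n)) = h ((y + real n) + 1)" by (simp add: algebra_simps)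
    also have "\<dots> = h y" using per Suc by simp
    finally show ?case .
  qed simp
  show ?thesis
  proof (cases "k \<ge> 0")
    case True
    then obtain n where "k = int n" by (metis nonneg_int_cases)
    then show ?thesis using nat by simp
  next
    case False
    then obtain n where "k = - int n" by (metis nonpos_int_cases linorder_linear)
    then show ?thesis using nat[of "x - real n" n] by simp
  qed
qed

lemma periodic_int:
  fixes h :: "real \<Rightarrow> real"
  assumes per: "\<forall>x. h (x + 1) = h x"
    and hI: "(h has_integral I) {-1/2..1/2}"
  shows "((\<lambda>x. h (x - r)) has_integral I) {-1/2..1/2}"
proof -
  define s where "s = r - of_int (floor r)"
  have s0: "0 \<le> s" and s1: "s < 1" unfolding s_def by linarith+
  have eqh: "h (x - r) = h (x - s)" for x
    using periodic_int_shift[OF per, of "x - r" "floor r"] unfolding s_def by (simp add: algebra_simps)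
  have hint: "h integrable_on {-1/2..1/2}" using hI by blast
  have A: "(h has_integral integral {1/2-s..1/2} h) {1/2-s..1/2}"
    using integrable_subinterval_real[OF hint, of "1/2-s" "1/2"] s0 s1 by auto
  have A': "((\<lambda>y. h (y + 1)) has_integral integral {1/2-s..1/2} h) {1/2-s-1..1/2-1}"
    by (rule has_integral_shift_real_ivl[OF A])
  have A'': "(h has_integral integral {1/2-s..1/2} h) {-1/2-s..-1/2}"
  proof -
    have e1: "(\<lambda>y. h (y + 1)) = h" using per by auto
    have e2: "{1/2-s-1..1/2-1} = {-1/2-s..-1/2::real}" by (intro arg_cong2[where f=atLeastAtMost]) simp_all
    show ?thesis using A' unfolding e1 e2 .
  qed
  have B: "(h has_integral integral {-1/2..1/2-s} h) {-1/2..1/2-s}"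
    using integrable_subinterval_real[OF hint, of "-1/2" "1/2-s"] s0 s1 by auto
  have sum: "integral {-1/2..1/2-s} h + integral {1/2-s..1/2} h = I"
  proof -
    have "integral {-1/2..1/2-s} h + integral {1/2-s..1/2} h = integral {-1/2..1/2} h"
      by (rule Henstock_Kurzweil_Integration.integral_combine[OF _ _ hint]) (use s0 s1 in auto)
    also have "\<dots> = I" using hI by (rule integral_unique)
    finally show ?thesis .
  qed
  have C: "(h has_integral I) {-1/2-s..1/2-s}"
    using has_integral_combine[OF _ _ A'' B] s0 s1 sum by (simp add: add.commute)
  have D: "((\<lambda>x. h (x + -s)) has_integral I) {-1/2-s - -s..1/2-s - -s}"
    by (rule has_integral_shift_real_ivl[OF C])
  show ?thesis using D eqh by simp
qed


lemma intg_u: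
  fixes f u :: "real \<Rightarrow> real"
  assumes fi: "f integrable_on {-1/2..1/2}" and u: "symmetric_decreasing u"
  shows "(\<lambda>x. f x * u x) integrable_on {-1/2..1/2}"
proof -
  have us: "u x = u (- x)" for x using u unfolding symmetric_decreasing_def by blast
  have ud: "0 \<le> x \<Longrightarrow> x \<le> y \<Longrightarrow> y \<le> 1/2 \<Longrightarrow> u y \<le> u x" for x y
    using u unfolding symmetric_decreasing_def by blast
  have f1: "f integrable_on {0..1/2}" by (rule integrable_subinterval_real[OF fi]) auto
  have f2: "f integrable_on {-1/2..0}" by (rule integrable_subinterval_real[OF fi]) auto
  have m1: "\<And>x y. 0 \<le> x \<Longrightarrow> x \<le> y \<Longrightarrow> y \<le> 1/2 \<Longrightarrow> - u x \<le> - u y" using ud by simp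
  have half: "(0::real) \<le> 1/2" by simp
  obtain c where "((\<lambda>x. (- u x) * f x) has_integral ((- u 0) * integral {0..c} f + (- u (1/2)) * integral {c..1/2} f)) {0..1/2}"
    by (rule second_mean_value_theorem_full[OF f1 half m1])
  then have "(\<lambda>x. (- u x) * f x) integrable_on {0..1/2}" by (rule has_integral_integrable)
  then have "(\<lambda>x. - ((- u x) * f x)) integrable_on {0..1/2}" by (rule integrable_neg)
  then have I1: "(\<lambda>x. f x * u x) integrable_on {0..1/2}" by (simp add: mult.commute)
  have ui: "u x \<le> u y" if "-1/2 \<le> x" "x \<le> y" "y \<le> 0" for x y
  proof -
    have "u (- x) \<le> u (- y)" by (rule ud) (use that in auto)
    then show ?thesis using us[of x] us[of y] by linarith
  qed
  obtain c where "((\<lambda>x. u x * f x) has_integral (u (-1/2) * integral {-1/2..c} f + u 0 * integral {c..0} f)) {-1/2..0}"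
    by (rule second_mean_value_theorem_full[OF f2 _ ui]) auto
  then have "(\<lambda>x. u x * f x) integrable_on {-1/2..0}" by (rule has_integral_integrable)
  then have I2: "(\<lambda>x. f x * u x) integrable_on {-1/2..0}" by (simp add: mult.commute)
  show ?thesis by (rule Henstock_Kurzweil_Integration.integrable_combine[OF _ _ I2 I1]) auto
qed

theorem lemma2p13:
  fixes u h hbar :: "real \<Rightarrow> real"
  assumes "symmetric_decreasing u"
    and "is_pdf h" and "is_pdf hbar"
    and "more_focused hbar h"
  shows "\<forall>r. integral {-1/2..1/2} (\<lambda>x. h (x - r) * u x)
              \<le> integral {-1/2..1/2} (\<lambda>x. hbar x * u x)"
proof
  fix r
  note u = assms(1)
  have us: "u x = u (- x)" for x using u unfolding symmetric_decreasing_def by blast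
  have ud: "0 \<le> x \<Longrightarrow> x \<le> y \<Longrightarrow> y \<le> 1/2 \<Longrightarrow> u y \<le> u x" for x y
    using u unfolding symmetric_decreasing_def by blast
  have hab: "h absolutely_integrable_on {-1/2..1/2}" and hi2: "integral {-1/2..1/2} h = 1" and hi3: "\<forall>x. h (x + 1) = h x"
    using assms(2) unfolding is_pdf_def periodic1_def by auto
  have hi1: "h integrable_on {-1/2..1/2}" using hab absolutely_integrable_on_def by blast
  have hbab: "hbar absolutely_integrable_on {-1/2..1/2}" and hbi2: "integral {-1/2..1/2} hbar = 1"
    using assms(3) unfolding is_pdf_def by auto
  have hbi1: "hbar integrable_on {-1/2..1/2}" using hbab absolutely_integrable_on_def by blast
  note hi = hi1 hi2 hi3
  note hbi = hbi1 hbi2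
  define g where "g x = h (x - r)" for x
  have gI: "(g has_integral 1) {-1/2..1/2}"
    unfolding g_def using periodic_int[OF hi(3), of 1 r] hi(1,2) by (metis integrable_integral)
  define f where "f x = hbar x - g x" for x
  have fI: "(f has_integral 0) {-1/2..1/2}"
    unfolding f_def using has_integral_diff[OF _ gI, of hbar 1] hbi by (metis integrable_integral cancel_comm_monoid_add_class.diff_cancel)
  have fi: "f integrable_on {-1/2..1/2}" using fI by blast
  have Fpos: "0 \<le> integral {-c..c} f" if "0 \<le> c" "c \<le> 1/2" for c
  proof -
    have gi: "g integrable_on {-c..c}" by (rule integrable_subinterval_real[OF has_integral_integrable[OF gI]]) (use that in auto)
    have hbi': "hbar integrable_on {-c..c}" by (rule integrable_subinterval_real[OF hbi(1)]) (use that in auto)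
    have "integral {-c..c} g = integral {(-r-c) - (-r)..(-r+c) - (-r)} (\<lambda>x. h (x + (-r)))"
      unfolding g_def by simp
    also have "\<dots> = integral {-r-c..-r+c} h" by (rule integral_shift_real_ivl)
    also have "\<dots> \<le> integral {-c..c} hbar" using assms(4) that unfolding more_focused_def by blast
    finally have "integral {-c..c} g \<le> integral {-c..c} hbar" .
    then show ?thesis unfolding f_def using integral_diff[OF hbi' gi] by simp
  qed
  have m1: "\<And>x y. 0 \<le> x \<Longrightarrow> x \<le> y \<Longrightarrow> y \<le> 1/2 \<Longrightarrow> - u x \<le> - u y" using ud by simp
  have half: "(0::real) \<le> 1/2" by simp
  define \<phi> where "\<phi> x = f x + f (- x)" for x
  have fneg: "(\<lambda>x. f (- x)) integrable_on {0..1/2}"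
    using integrable_subinterval_real[OF fi, of "-1/2" 0] Henstock_Kurzweil_Integration.integrable_reflect_real[where f=f and a="-1/2" and b=0] by simp
  have f0: "f integrable_on {0..1/2}" by (rule integrable_subinterval_real[OF fi]) auto
  have phii: "\<phi> integrable_on {0..1/2}" unfolding \<phi>_def using integrable_add[OF f0 fneg] by simp
  have Phi: "integral {0..c} \<phi> = integral {-c..c} f" if "0 \<le> c" "c \<le> 1/2" for c
  proof -
    have a: "f integrable_on {0..c}" by (rule integrable_subinterval_real[OF fi]) (use that in auto)
    have b: "f integrable_on {-c..0}" by (rule integrable_subinterval_real[OF fi]) (use that in auto)
    have b': "(\<lambda>x. f (- x)) integrable_on {0..c}" using Henstock_Kurzweil_Integration.integrable_reflect_real[where f=f and a="-c" and b=0] b by simp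
    have "integral {0..c} \<phi> = integral {0..c} f + integral {0..c} (\<lambda>x. f (- x))"
      unfolding \<phi>_def by (rule integral_add[OF a b'])
    also have "integral {0..c} (\<lambda>x. f (- x)) = integral {-c..0} f"
      using Henstock_Kurzweil_Integration.integral_reflect_real[where f=f and a="-c" and b=0] by simp
    also have "integral {0..c} f + integral {-c..0} f = integral {-c..c} f"
      using Henstock_Kurzweil_Integration.integral_combine[of "-c" 0 c f] that
        integrable_subinterval_real[OF fi, of "-c" c] by simp
    finally show ?thesis .
  qed
  have Phi0: "integral {0..1/2} \<phi> = 0" using Phi[of "1/2"] integral_unique[OF fI] by simp
  obtain c where c: "c \<in> {0..1/2}" and cI: "((\<lambda>x. (- u x) * \<phi> x) has_integral ((- u 0) * integral {0..c} \<phi> + (- u (1/2)) * integral {c..1/2} \<phi>)) {0..1/2}"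
    by (rule second_mean_value_theorem_full[OF phii half m1])
  have split: "integral {c..1/2} \<phi> = - integral {0..c} \<phi>"
    using Henstock_Kurzweil_Integration.integral_combine[OF _ _ phii, of c] c Phi0 by simp
  have Fc: "0 \<le> integral {0..c} \<phi>" using Phi[of c] Fpos[of c] c by simp
  have u0: "u (1/2) \<le> u 0" using ud[of 0 "1/2"] by simp
  have key: "0 \<le> integral {0..1/2} (\<lambda>x. \<phi> x * u x)"
  proof -
    have "integral {0..1/2} (\<lambda>x. (- u x) * \<phi> x) = - (u 0 - u (1/2)) * integral {0..c} \<phi>"
      using integral_unique[OF cI] split by (simp add: algebra_simps)
    moreover have "integral {0..1/2} (\<lambda>x. (- u x) * \<phi> x) = - integral {0..1/2} (\<lambda>x. \<phi> x * u x)"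
    proof -
      have "(\<lambda>x. (- u x) * \<phi> x) = (\<lambda>x. - (\<phi> x * u x))" by (rule ext) simp
      then show ?thesis using integral_neg[where S="{0..1/2}" and f="\<lambda>x. \<phi> x * u x"] by simp
    qed
    moreover have "0 \<le> (u 0 - u (1/2)) * integral {0..c} \<phi>"
      by (rule mult_nonneg_nonneg) (use u0 Fc in auto)
    ultimately show ?thesis by linarith
  qed
  have Ihb: "(\<lambda>x. hbar x * u x) integrable_on {-1/2..1/2}" by (rule intg_u[OF hbi1 u])
  have Ig: "(\<lambda>x. g x * u x) integrable_on {-1/2..1/2}" by (rule intg_u[OF has_integral_integrable[OF gI] u])
  have If: "(\<lambda>x. f x * u x) integrable_on {-1/2..1/2}" by (rule intg_u[OF fi u])
  have diff: "integral {-1/2..1/2} (\<lambda>x. f x * u x) = integral {-1/2..1/2} (\<lambda>x. hbar x * u x) - integral {-1/2..1/2} (\<lambda>x. g x * u x)"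
  proof -
    have "(\<lambda>x. f x * u x) = (\<lambda>x. hbar x * u x - g x * u x)" by (rule ext) (simp add: f_def algebra_simps)
    then show ?thesis using integral_diff[OF Ihb Ig] by simp
  qed
  have If1: "(\<lambda>x. f x * u x) integrable_on {-1/2..0}" by (rule integrable_subinterval_real[OF If]) auto
  have If2: "(\<lambda>x. f x * u x) integrable_on {0..1/2}" by (rule integrable_subinterval_real[OF If]) auto
  have ueq: "(\<lambda>x. f (- x) * u (- x)) = (\<lambda>x. f (- x) * u x)" by (rule ext) (metis us)
  have If1': "(\<lambda>x. f (- x) * u x) integrable_on {0..1/2}"
    using Henstock_Kurzweil_Integration.integrable_reflect_real[where f="\<lambda>x. f x * u x" and a="-1/2" and b=0] If1 ueq by simp
  have R: "integral {-1/2..0} (\<lambda>x. f x * u x) = integral {0..1/2} (\<lambda>x. f (- x) * u x)"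
    using Henstock_Kurzweil_Integration.integral_reflect_real[where f="\<lambda>x. f x * u x" and a="-1/2" and b=0] ueq by simp
  have fold: "integral {-1/2..1/2} (\<lambda>x. f x * u x) = integral {0..1/2} (\<lambda>x. \<phi> x * u x)"
  proof -
    have "integral {-1/2..1/2} (\<lambda>x. f x * u x) = integral {-1/2..0} (\<lambda>x. f x * u x) + integral {0..1/2} (\<lambda>x. f x * u x)"
      by (rule Henstock_Kurzweil_Integration.integral_combine[symmetric, OF _ _ If]) auto
    also have "\<dots> = integral {0..1/2} (\<lambda>x. f (- x) * u x + f x * u x)"
      unfolding R by (rule integral_add[symmetric, OF If1' If2])
    also have "(\<lambda>x. f (- x) * u x + f x * u x) = (\<lambda>x. \<phi> x * u x)"
      by (rule ext) (simp add: \<phi>_def algebra_simps)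
    finally show ?thesis .
  qed
  have geq: "(\<lambda>x. h (x - r) * u x) = (\<lambda>x. g x * u x)" by (simp add: g_def)
  show "integral {-1/2..1/2} (\<lambda>x. h (x - r) * u x) \<le> integral {-1/2..1/2} (\<lambda>x. hbar x * u x)"
    unfolding geq using diff fold key by linarith
qed

end
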